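(* Let $A_{1}\in \mathbb{C}^{m\times n}$, $b_{1}\in \mathbb{C}^{m}$, $A_{2}\in \mathbb{C}^{k\times n}$ with $r(A_{2})=k\geq 1$, and $b_{2}\in \mathbb{C}^{k}$. Let $D_{2}$ be an arbitrary but fixed matrix with $R(D_{2})=N(A_{2})$, and define \[ \Xi =\{D_{2}(A_{1}D_{2})^{\dagger}A_{1}A_{1}^{\dagger}b_{1}+(I-D_{2}(A_{1}D_{2})^{\dagger}A_{1})(A_{2}^{\dagger}b_{2}+z):z\in N(A_{2})\}. \] Assume further that $r(A_{1})=n$. Then \[ D_{2}(A_{1}D_{2})^{\dagger}A_{1}=P_{N(A_{2}),\,(A_{1}^{*}A_{1})^{-1}R(A_{2}^{*})}, \] and $\Xi$ is a singleton, \[ \Xi=\{A_{1}^{\dagger}b_{1}+(A_{1}^{*}A_{1})^{-1}A_{2}^{*}\big(A_2 (A_{1}^{*}A_{1})^{-1}A_{2}^{*}\big)^{-1}(b_{2}-A_{2}A_{1}^{\dagger}b_{1})\}. \]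
   Context: $A^{*}$ is the conjugate transpose, $A^{\dagger}$ the Moore–Penrose inverse, $r(A)$, $R(A)$, $N(A)$ the rank, range and null space of $A$. For complementary subspaces $L,M$ of $\mathbb{C}^n$ (i.e. $L+M=\mathbb{C}^n$, $L\cap M=\{0\}$), $P_{L,M}$ denotes the oblique projector onto $L$ along $M$ (the idempotent matrix with range $L$ and null space $M$). For a matrix $B$ and subspace $S$, $BS=\{Bs:s\in S\}$. (It is known that every solution of $\min_{x}\|A_1x-b_1\|^2$ subject to $A_2x=b_2$ lies in $\Xi$.) *)

theory Defs
  imports "HOL-Analysis.Analysis"
begin

definition conj_transpose :: "complex^'n^'m \<Rightarrow> complex^'m^'n" where
  "conj_transpose A = (\<chi> i j. cnj (A $ j $ i))"

definition mp_inverse :: "complex^'n^'m \<Rightarrow> complex^'m^'n" where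
  "mp_inverse A = (THE X. A ** X ** A = A \<and> X ** A ** X = X \<and>
      conj_transpose (A ** X) = A ** X \<and> conj_transpose (X ** A) = X ** A)"

definition mrange :: "complex^'n^'m \<Rightarrow> (complex^'m) set" where
  "mrange A = range (\<lambda>x. A *v x)"

definition mnull :: "complex^'n^'m \<Rightarrow> (complex^'n) set" where
  "mnull A = {x. A *v x = 0}"

definition oblique_proj :: "(complex^'n) set \<Rightarrow> (complex^'n) set \<Rightarrow> complex^'n^'n" where
  "oblique_proj L M = (THE P. P ** P = P \<and> mrange P = L \<and> mnull P = M)"

end

theory Submission
  imports Defs
begin


abbreviation ct where "ct \<equiv> conj_transpose"

lemma ct_nth[simp]: "ct A $ i $ j = cnj (A $ j $ i)"
  by (simp add: conj_transpose_def)

lemma ct_ct[simp]: "ct (ct A) = A"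
  by (simp add: vec_eq_iff)

lemma ct_mult: "ct (A ** B) = ct B ** ct A"
  unfolding conj_transpose_def matrix_matrix_mult_def
  by (simp add: vec_eq_iff cnj_sum mult.commute)

lemma ct_add: "ct (A + B) = ct A + ct B"
  by (simp add: vec_eq_iff)

lemma ct_diff: "ct (A - B) = ct A - ct B"
  by (simp add: vec_eq_iff)

lemma ct_mat1[simp]: "ct (mat 1) = mat 1"
  by (simp add: vec_eq_iff mat_def)

lemma ct_zero[simp]: "ct 0 = 0"
  by (simp add: vec_eq_iff)

lemma matrix_sub_ldistrib: "(A::'a::ring_1^'n^'m) ** (B - C) = A ** B - A ** C"
  unfolding matrix_matrix_mult_def by (simp add: vec_eq_iff right_diff_distrib sum_subtractf)

lemma matrix_sub_rdistrib: "((B::'a::ring_1^'n^'m) - C) ** A = B ** A - C ** A"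
  unfolding matrix_matrix_mult_def by (simp add: vec_eq_iff left_diff_distrib sum_subtractf)

definition ci :: "complex^'n \<Rightarrow> complex^'n \<Rightarrow> complex" where
  "ci x y = (\<Sum>i\<in>UNIV. cnj (x$i) * y$i)"

lemma ci_adj: "ci x (A *v y) = ci (ct A *v x) y"
proof -
  have "ci x (A *v y) = (\<Sum>i\<in>UNIV. \<Sum>j\<in>UNIV. cnj (x$i) * A$i$j * y$j)"
    unfolding ci_def matrix_vector_mult_def by (simp add: sum_distrib_left mult.assoc)
  also have "\<dots> = (\<Sum>j\<in>UNIV. \<Sum>i\<in>UNIV. cnj (x$i) * A$i$j * y$j)" by (rule sum.swap)
  also have "\<dots> = ci (ct A *v x) y"
    unfolding ci_def matrix_vector_mult_def conj_transpose_def
    by (simp add: cnj_sum sum_distrib_left mult.commute mult.left_commute)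
  finally show ?thesis .
qed


lemma ci_self: "ci x x = of_real (\<Sum>i\<in>UNIV. (cmod (x$i))^2)"
    unfolding ci_def of_real_sum
  proof (rule sum.cong)
    fix i show "cnj (x$i) * x$i = of_real ((cmod (x$i))^2)"
      using complex_norm_square[of "x$i"] by (simp add: mult.commute)
  qed simp

lemma ci_self_eq0: "ci x x = 0 \<Longrightarrow> x = 0"
proof -
  assume h: "ci x x = 0"
  hence "complex_of_real (\<Sum>i\<in>UNIV. (cmod (x$i))^2) = 0" using ci_self[of x] by simp
  hence "(\<Sum>i\<in>UNIV. (cmod (x$i))^2) = 0" by (simp only: of_real_eq_0_iff)
  hence "\<forall>i\<in>UNIV. (cmod (x$i))^2 = 0"
    using sum_nonneg_eq_0_iff[of UNIV "\<lambda>i. (cmod (x$i))^2"] by simp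
  thus "x = 0" by (simp add: vec_eq_iff)
qed

lemma Re_ci_self_eq0: "Re (ci x x) = 0 \<Longrightarrow> x = 0"
  using ci_self[of x] ci_self_eq0[of x] by simp

lemma inner_ci: "x \<bullet> y = Re (ci x y)"
  unfolding ci_def inner_vec_def inner_complex_def by (simp add: Re_sum)

lemma cancel_vec: "ct A *v (A *v x) = 0 \<Longrightarrow> A *v x = 0"
proof -
  assume h: "ct A *v (A *v x) = 0"
  have "ci (A *v x) (A *v x) = ci (ct A *v (A *v x)) x" by (rule ci_adj)
  also have "\<dots> = 0" using h by (simp add: ci_def)
  finally show ?thesis by (rule ci_self_eq0)
qed



lemma decomp:
  fixes B :: "complex^'m^'p" and x :: "complex^'p"
  shows "\<exists>v z. x = B *v v + z \<and> ct B *v z = 0"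
proof -
  let ?S = "range (\<lambda>v. B *v v)"
  have sub: "subspace ?S"
    unfolding subspace_def
  proof (intro conjI ballI allI)
    show "0 \<in> ?S" using matrix_vector_mult_0_right[of B] by (metis rangeI)
    fix a b assume "a \<in> ?S" "b \<in> ?S"
    then obtain u w where "a = B *v u" "b = B *v w" by auto
    hence "a + b = B *v (u + w)" by (simp add: matrix_vector_right_distrib)
    thus "a + b \<in> ?S" by (rule image_eqI) simp
  next
    fix c :: real and a assume "a \<in> ?S"
    then obtain u where "a = B *v u" by auto
    hence "c *\<^sub>R a = B *v (c *\<^sub>R u)" unfolding matrix_vector_mult_def by (simp add: vec_eq_iff scaleR_sum_right)
    thus "c *\<^sub>R a \<in> ?S" by (rule image_eqI) simp
  qed
  obtain y z where y: "y \<in> span ?S" and orth: "\<And>w. w \<in> span ?S \<Longrightarrow> orthogonal z w"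
    and xyz: "x = y + z"
    using orthogonal_subspace_decomp_exists[of ?S x] by blast
  have sp: "span ?S = ?S" using sub by (simp only: span_eq_iff)
  from y obtain v where v: "y = B *v v" unfolding sp by blast
  have "orthogonal z (B *v (ct B *v z))"
    by (rule orth) (simp only: sp rangeI)
  hence "Re (ci z (B *v (ct B *v z))) = 0" by (simp add: orthogonal_def inner_ci)
  hence "Re (ci (ct B *v z) (ct B *v z)) = 0" by (simp add: ci_adj)
  hence "ct B *v z = 0" by (rule Re_ci_self_eq0)
  with v xyz show ?thesis by blast
qed



lemma mv_axis: "(A::'a::semiring_1^'n^'m) *v axis j 1 = column j A"
  by (simp add: vec_eq_iff matrix_vector_mult_def axis_def column_def if_distrib if_distribR cong: if_cong)

lemma mat_eq_cols: "(\<And>j. (A::'a::semiring_1^'n^'m) *v axis j 1 = B *v axis j 1) \<Longrightarrow> A = B"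
proof -
  assume h: "\<And>j. A *v axis j 1 = B *v axis j 1"
  have "A $ i $ j = B $ i $ j" for i j
  proof -
    have "column j A $ i = column j B $ i" using h[of j] by (simp only: mv_axis)
    thus ?thesis by (simp add: column_def)
  qed
  thus ?thesis by (simp add: vec_eq_iff)
qed

lemma ct_cancel_mat: "ct Y ** Y = 0 \<Longrightarrow> Y = 0"
proof -
  assume h: "ct Y ** Y = 0"
  have "\<forall>x. Y *v x = 0 *v x"
  proof
    fix x
    have "ct Y *v (Y *v x) = (ct Y ** Y) *v x" by (rule matrix_vector_mul_assoc)
    also have "\<dots> = 0" unfolding h by (rule matrix_vector_mult_0)
    finally have "Y *v x = 0" by (rule cancel_vec)
    thus "Y *v x = 0 *v x" by (simp only: matrix_vector_mult_0)
  qed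
  thus ?thesis using matrix_eq[of Y 0] by blast
qed

lemma herm_trick: "ct P = ct P ** P \<Longrightarrow> ct P = P"
proof -
  assume h: "ct P = ct P ** P"
  have "P = ct (ct P)" by simp
  also have "\<dots> = ct (ct P ** P)" using h by (rule arg_cong)
  also have "\<dots> = ct P ** P" by (simp add: ct_mult)
  finally have c: "P = ct P ** P" .
  show ?thesis using trans[OF h sym[OF c]] .
qed

definition pen :: "complex^'n^'m \<Rightarrow> complex^'m^'n \<Rightarrow> bool" where
  "pen A X \<longleftrightarrow> A ** X ** A = A \<and> X ** A ** X = X \<and> ct (A ** X) = A ** X \<and> ct (X ** A) = X ** A"

lemma mp_inverse_pen: "mp_inverse A = (THE X. pen A X)"
  unfolding mp_inverse_def pen_def ..

lemma pen_unique:
  assumes "pen A X" "pen A Y" shows "X = Y"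
proof -
  from assms have a1: "A ** X ** A = A" and a2: "X ** A ** X = X" and a3: "ct (A ** X) = A ** X"
    and a4: "ct (X ** A) = X ** A" and b1: "A ** Y ** A = A" and b2: "Y ** A ** Y = Y"
    and b3: "ct (A ** Y) = A ** Y" and b4: "ct (Y ** A) = Y ** A" by (auto simp: pen_def)
  have "X = X ** (A ** X)" using a2 by (simp add: matrix_mul_assoc)
  also have "\<dots> = X ** ct (A ** X)" using a3 by simp
  also have "\<dots> = X ** (ct X ** ct A)" by (simp add: ct_mult)
  also have "\<dots> = X ** (ct X ** ct (A ** Y ** A))" using b1 by simp
  also have "\<dots> = X ** ct (A ** X) ** ct (A ** Y)" by (simp add: ct_mult matrix_mul_assoc)
  also have "\<dots> = X ** (A ** X) ** (A ** Y)" using a3 b3 by simp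
  also have "\<dots> = (X ** A ** X) ** A ** Y" by (simp add: matrix_mul_assoc)
  also have "\<dots> = X ** A ** Y" using a2 by simp
  finally have x: "X = X ** A ** Y" .
  have "Y = (Y ** A) ** Y" using b2 by (simp add: matrix_mul_assoc)
  also have "\<dots> = ct (Y ** A) ** Y" using b4 by simp
  also have "\<dots> = ct A ** ct Y ** Y" by (simp add: ct_mult)
  also have "\<dots> = ct (A ** X ** A) ** ct Y ** Y" using a1 by simp
  also have "\<dots> = ct (X ** A) ** ct (Y ** A) ** Y" by (simp add: ct_mult matrix_mul_assoc)
  also have "\<dots> = (X ** A) ** (Y ** A) ** Y" using a4 b4 by simp
  also have "\<dots> = X ** A ** (Y ** A ** Y)" by (simp add: matrix_mul_assoc)
  also have "\<dots> = X ** A ** Y" using b2 by simp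
  finally have y: "Y = X ** A ** Y" .
  from x y show ?thesis by simp
qed

lemma pen_exists:
  fixes M :: "complex^'p^'m"
  shows "\<exists>X. pen M X"
proof -
  have "\<forall>j::'m. \<exists>w. ct M *v (axis j 1 - M *v w) = 0"
  proof
    fix j :: 'm
    obtain w z where "axis j 1 = M *v w + z" "ct M *v z = 0" using decomp[where B=M and x="axis j 1"] by blast
    thus "\<exists>w. ct M *v (axis j 1 - M *v w) = 0" by (metis add_diff_cancel_left')
  qed
  then obtain W where W: "\<And>j. ct M *v (axis j 1 - M *v W j) = 0" by metis
  have "\<forall>j::'m. \<exists>u. M *v (ct M *v u) = M *v W j"
  proof
    fix j :: 'm
    obtain u n where un: "W j = ct M *v u + n" "ct (ct M) *v n = 0" using decomp[where B="ct M" and x="W j"] by blast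
    hence "M *v W j = M *v (ct M *v u)" by (simp add: matrix_vector_right_distrib)
    thus "\<exists>u. M *v (ct M *v u) = M *v W j" by metis
  qed
  then obtain U where U: "\<And>j. M *v (ct M *v U j) = M *v W j" by metis
  define Um :: "complex^'m^'m" where "Um = (\<chi> i j. U j $ i)"
  have Umc: "Um *v axis j 1 = U j" for j by (simp add: mv_axis Um_def column_def vec_eq_iff)
  define X where "X = ct M ** Um"
  have Z: "ct M ** (mat 1 - M ** X) = 0"
  proof (rule mat_eq_cols)
    fix j
    have "(ct M ** (mat 1 - M ** X)) *v axis j 1 = ct M *v (axis j 1 - M *v (ct M *v (Um *v axis j 1)))"
      by (simp add: X_def matrix_vector_mul_assoc[symmetric] matrix_vector_mult_diff_rdistrib
                    matrix_vector_mult_diff_distrib)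
    also have "\<dots> = 0" using W[of j] U[of j] by (simp add: Umc)
    finally show "(ct M ** (mat 1 - M ** X)) *v axis j 1 = 0 *v axis j 1" by simp
  qed
  hence e1: "ct M = ct M ** M ** X"
    by (simp add: matrix_sub_ldistrib matrix_mul_assoc)
  have "ct (M ** X) = ct X ** ct M" by (simp add: ct_mult)
  also have "\<dots> = ct X ** (ct M ** M ** X)" using e1 by simp
  also have "\<dots> = ct (M ** X) ** (M ** X)" by (simp add: ct_mult matrix_mul_assoc)
  finally have h3: "ct (M ** X) = M ** X" by (rule herm_trick)
  have p1: "M ** X ** M = M"
  proof -
    have "M = ct (ct M)" by simp
    also have "\<dots> = ct (ct M ** M ** X)" using e1 by simp
    also have "\<dots> = ct (M ** X) ** M" by (simp add: ct_mult matrix_mul_assoc)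
    finally show ?thesis using h3 by simp
  qed
  have p2: "X ** M ** X = X"
  proof -
    define Y where "Y = X ** M ** X - X"
    have Yf: "Y = ct M ** (Um ** M ** X - Um)"
      by (simp add: Y_def X_def matrix_sub_ldistrib matrix_mul_assoc)
    have MY: "M ** Y = 0"
      unfolding Y_def using p1 by (simp add: matrix_sub_ldistrib matrix_mul_assoc)
    have cY: "ct Y = ct (Um ** M ** X - Um) ** M" unfolding Yf by (simp add: ct_mult)
    have "ct Y ** Y = ct (Um ** M ** X - Um) ** (M ** Y)"
      unfolding cY by (simp add: matrix_mul_assoc)
    also have "\<dots> = 0" using MY by simp
    finally have "Y = 0" by (rule ct_cancel_mat)
    thus ?thesis by (simp add: Y_def)
  qed
  have p4: "ct (X ** M) = X ** M"
  proof (rule herm_trick[symmetric, THEN sym])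
    show "ct (X ** M) = ct (X ** M) ** (X ** M)"
    proof -
      have "ct (X ** M) ** (mat 1 - X ** M) = ct M ** ct Um ** (M - M ** X ** M)"
        by (simp add: X_def ct_mult matrix_sub_ldistrib matrix_mul_assoc)
      also have "\<dots> = 0" using p1 by simp
      finally show ?thesis by (simp add: matrix_sub_ldistrib)
    qed
  qed
  show ?thesis using p1 p2 h3 p4 unfolding pen_def by blast
qed

lemma pen_mp: "pen A (mp_inverse A)"
proof -
  obtain X where X: "pen A X" using pen_exists by blast
  show ?thesis unfolding mp_inverse_pen
    by (rule theI[where a=X]) (rule X, rule pen_unique[OF _ X])
qed



lemma rank_full_col_inj:
  fixes A :: "complex^'n^'m"
  assumes "rank A = CARD('n)" and "A *v x = 0" shows "x = 0"
proof -
  have "vec.span (rows A) = UNIV"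
    using assms(1) unfolding row_rank_def_gen
    by (metis vec.dim_eq_full vec.dim_UNIV vec.dimension_def vec_dim_card)
  then obtain B :: "complex^'m^'n" where B: "B ** A = mat 1"
    using matrix_left_invertible_span_rows_gen by blast
  have "x = (B ** A) *v x" by (simp add: B)
  also have "\<dots> = B *v (A *v x)" by (simp add: matrix_vector_mul_assoc)
  finally show ?thesis using assms(2) by simp
qed

lemma rank_full_row_rinv:
  fixes A :: "complex^'n^'m"
  assumes r: "rank A = CARD('m)" shows "\<exists>B. A ** B = mat 1"
  unfolding matrix_right_invertible_independent_rows
proof (rule ccontr)
  assume "\<not> (\<forall>c. (\<Sum>i\<in>UNIV. c i *s row i A) = 0 \<longrightarrow> (\<forall>i. c i = 0))"
  then obtain c i where c: "(\<Sum>i\<in>UNIV. c i *s row i A) = 0" and ci: "c i \<noteq> 0" by blast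
  let ?U = "UNIV :: 'm set"
  have fU: "finite ?U" by simp
  have s0: "c i *s row i A + (\<Sum>j\<in>?U-{i}. c j *s row j A) = 0"
    using c sum.remove[OF fU UNIV_I, of "\<lambda>j. c j *s row j A" i] by simp
  hence s: "(\<Sum>j\<in>?U-{i}. c j *s row j A) = - (c i *s row i A)"
    by (simp add: add_eq_0_iff)
  have thr0: "- row i A = (1 / c i) *s (\<Sum>j\<in>?U-{i}. c j *s row j A)"
    unfolding s using ci by (simp add: vec_eq_iff)
  have "(\<Sum>j\<in>?U-{i}. c j *s row j A) \<in> vec.span {row j A| j. j \<noteq> i}"
    by (rule vec.span_sum) (auto intro: vec.span_base vec.span_scale)
  hence thr: "- row i A \<in> vec.span {row j A| j. j \<noteq> i}"
    unfolding thr0 by (rule vec.span_scale)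
  hence thr': "row i A \<in> vec.span {row j A| j. j \<noteq> i}"
    using vec.span_neg[OF thr] by simp
  have "rows A \<subseteq> vec.span {row j A| j. j \<noteq> i}"
  proof
    fix r assume "r \<in> rows A"
    then obtain j where j: "r = row j A" by (auto simp: rows_def)
    show "r \<in> vec.span {row j A| j. j \<noteq> i}"
    proof (cases "j = i")
      case True thus ?thesis using thr' j by simp
    next
      case False thus ?thesis using j by (auto intro: vec.span_base)
    qed
  qed
  moreover have fin: "finite {row j A| j. j \<noteq> i}" by simp
  ultimately have "vec.dim (rows A) \<le> card {row j A| j. j \<noteq> i}"
    by (rule vec.dim_le_card)
  also have "\<dots> \<le> card (?U - {i})"
  proof -
    have "{row j A| j. j \<noteq> i} = (\<lambda>j. row j A) ` (?U - {i})" by auto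
    thus ?thesis using card_image_le[of "?U - {i}" "\<lambda>j. row j A"] by simp
  qed
  also have "\<dots> < CARD('m)" by (simp add: card_Diff1_less)
  finally show False using r unfolding row_rank_def_gen by simp
qed

lemma inj_invertible:
  fixes G :: "complex^'n^'n"
  assumes "\<And>x. G *v x = 0 \<Longrightarrow> x = 0"
  shows "G ** matrix_inv G = mat 1 \<and> matrix_inv G ** G = mat 1"
proof -
  have "inj ((*v) G)"
    by (rule injI) (metis assms matrix_vector_mult_diff_distrib eq_iff_diff_eq_0)
  hence "det G \<noteq> 0"
    using det_nz_iff_inj_gen[OF matrix_vector_mul_linear_gen[of G]] by simp
  hence "invertible G" by (simp add: invertible_det_nz)
  then obtain B where "G ** B = mat 1 \<and> B ** G = mat 1" unfolding invertible_def by blast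
  thus ?thesis unfolding matrix_inv_def by (rule someI)
qed

lemma proj_unique:
  fixes P Q :: "complex^'n^'n"
  assumes "P ** P = P" "Q ** Q = Q" "mrange P = mrange Q" "mnull P = mnull Q"
  shows "P = Q"
proof -
  have "P *v x = Q *v x" for x
  proof -
    have "Q *v (x - Q *v x) = 0"
      using assms(2) by (simp add: matrix_vector_mult_diff_distrib matrix_vector_mul_assoc)
    hence "x - Q *v x \<in> mnull P" using assms(4) by (simp add: mnull_def)
    hence 1: "P *v x = P *v (Q *v x)" by (simp add: mnull_def matrix_vector_mult_diff_distrib)
    have "Q *v x \<in> mrange P" using assms(3) by (simp add: mrange_def)
    then obtain w where "Q *v x = P *v w" by (auto simp: mrange_def)
    hence "P *v (Q *v x) = Q *v x" using assms(1) by (simp add: matrix_vector_mul_assoc)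
    with 1 show ?thesis by simp
  qed
  thus ?thesis using matrix_eq by blast
qed

lemma oblique_eq:
  assumes "P ** P = P" "mrange P = L" "mnull P = N"
  shows "oblique_proj L N = P"
  unfolding oblique_proj_def
proof (rule the_equality)
  show "P ** P = P \<and> mrange P = L \<and> mnull P = N" using assms by simp
  fix Q assume "Q ** Q = Q \<and> mrange Q = L \<and> mnull Q = N"
  thus "Q = P" using proj_unique[of Q P] assms by simp
qed



theorem corollary3:
  fixes A1 :: "complex^'n^'m" and b1 :: "complex^'m"
    and A2 :: "complex^'n^'k" and b2 :: "complex^'k"
    and D2 :: "complex^'p^'n"
  assumes rankA2: "rank A2 = CARD('k)"
    and D2: "mrange D2 = mnull A2"
    and rankA1: "rank A1 = CARD('n)"
  shows "D2 ** mp_inverse (A1 ** D2) ** A1 =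
           oblique_proj (mnull A2)
             ((\<lambda>x. matrix_inv (conj_transpose A1 ** A1) *v x) ` mrange (conj_transpose A2))
       \<and> {D2 ** mp_inverse (A1 ** D2) ** A1 ** mp_inverse A1 *v b1
            + (mat 1 - D2 ** mp_inverse (A1 ** D2) ** A1) *v (mp_inverse A2 *v b2 + z) | z.
            z \<in> mnull A2}
         = {mp_inverse A1 *v b1
            + (matrix_inv (conj_transpose A1 ** A1) ** conj_transpose A2
               ** matrix_inv (A2 ** matrix_inv (conj_transpose A1 ** A1) ** conj_transpose A2))
              *v (b2 - A2 *v (mp_inverse A1 *v b1))}"
proof -
  define A where "A = A1"
  define M where "M = A ** D2"
  define Mp where "Mp = mp_inverse M"
  define E where "E = D2 ** Mp ** A"
  define G where "G = ct A ** A"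
  define Gi where "Gi = matrix_inv G"
  define S where "S = A2 ** Gi ** ct A2"
  define Si where "Si = matrix_inv S"
  define F where "F = Gi ** ct A2 ** Si ** A2"
  define K where "K = (\<lambda>x. Gi *v x) ` mrange (ct A2)"
  define Ap where "Ap = mp_inverse A"
  define A2p where "A2p = mp_inverse A2"
  have injA: "\<And>x. A *v x = 0 \<Longrightarrow> x = 0"
    unfolding A_def using rank_full_col_inj[OF rankA1] by blast
  have injA': "\<And>x y. A *v x = A *v y \<Longrightarrow> x = y"
    using injA by (metis eq_iff_diff_eq_0 matrix_vector_mult_diff_distrib)
  obtain B2 where B2: "A2 ** B2 = mat 1" using rank_full_row_rinv[OF rankA2] by blast
  have injA2c: "v = 0" if "ct A2 *v v = 0" for v
  proof -
    have "v = ct (A2 ** B2) *v v" by (simp add: B2)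
    also have "\<dots> = ct B2 *v (ct A2 *v v)" by (simp add: ct_mult matrix_vector_mul_assoc matrix_mul_assoc)
    finally show ?thesis using that by simp
  qed
  have A2D2: "A2 *v (D2 *v x) = 0" for x
    using D2 unfolding mrange_def mnull_def by blast
  have A2D2m: "A2 ** D2 = 0"
    using A2D2 matrix_eq[of "A2 ** D2" 0] by (simp add: matrix_vector_mul_assoc matrix_mul_assoc)
  have Ginv: "G ** Gi = mat 1 \<and> Gi ** G = mat 1"
    unfolding Gi_def
  proof (rule inj_invertible)
    fix x assume "G *v x = 0"
    hence "ct A *v (A *v x) = 0" by (simp add: G_def matrix_vector_mul_assoc matrix_mul_assoc)
    hence "A *v x = 0" by (rule cancel_vec)
    thus "x = 0" by (rule injA)
  qed
  have GGi: "G *v (Gi *v y) = y" for y using Ginv by (simp add: matrix_vector_mul_assoc matrix_mul_assoc)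
  have GiG: "Gi *v (G *v y) = y" for y using Ginv by (simp add: matrix_vector_mul_assoc matrix_mul_assoc)
  have Sinv: "S ** Si = mat 1 \<and> Si ** S = mat 1"
    unfolding Si_def
  proof (rule inj_invertible)
    fix v assume Sv: "S *v v = 0"
    define w where "w = Gi *v (ct A2 *v v)"
    have Aw2: "A2 *v w = 0" using Sv by (simp add: w_def S_def matrix_vector_mul_assoc matrix_mul_assoc)
    have Gw: "G *v w = ct A2 *v v" by (simp add: w_def GGi)
    have "ci (A *v w) (A *v w) = ci w (ct A *v (A *v w))"
      using ci_adj[of w "ct A" "A *v w"] by simp
    also have "\<dots> = ci w (ct A2 *v v)" using Gw by (simp add: G_def matrix_vector_mul_assoc matrix_mul_assoc)
    also have "\<dots> = ci (A2 *v w) v" using ci_adj[of w "ct A2" v] by simp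
    also have "\<dots> = 0" using Aw2 by (simp add: ci_def)
    finally have "A *v w = 0" by (rule ci_self_eq0)
    hence "w = 0" by (rule injA)
    hence "ct A2 *v v = 0" using Gw by simp
    thus "v = 0" by (rule injA2c)
  qed
  have pM: "pen M Mp" unfolding Mp_def by (rule pen_mp)
  have pm1: "M ** Mp ** M = M" and pm2: "Mp ** M ** Mp = Mp"
    and pm3: "ct (M ** Mp) = M ** Mp" using pM by (auto simp: pen_def)
  have pA2: "pen A2 A2p" unfolding A2p_def by (rule pen_mp)
  have A2A2p: "A2 ** A2p = mat 1"
  proof -
    have "A2 ** A2p = A2 ** A2p ** A2 ** B2" using B2 by (simp add: matrix_mul_assoc[symmetric])
    also have "\<dots> = A2 ** B2" using pA2 by (simp add: pen_def)
    finally show ?thesis using B2 by simp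
  qed
  have ctM: "ct M = ct M ** M ** Mp"
  proof -
    have "ct M = ct (M ** Mp ** M)" using pm1 by simp
    also have "\<dots> = ct M ** ct (M ** Mp)" by (simp add: ct_mult)
    also have "\<dots> = ct M ** (M ** Mp)" using pm3 by simp
    finally show ?thesis by (simp add: matrix_mul_assoc)
  qed
  have Mpc: "Mp = Mp ** ct Mp ** ct M"
  proof -
    have "Mp = Mp ** (M ** Mp)" using pm2 by (simp add: matrix_mul_assoc)
    also have "\<dots> = Mp ** ct (M ** Mp)" using pm3 by simp
    finally show ?thesis by (simp add: ct_mult matrix_mul_assoc)
  qed
  have EE: "E ** E = E"
  proof -
    have "E ** E = D2 ** (Mp ** M ** Mp) ** A" by (simp add: E_def M_def matrix_mul_assoc)
    also have "\<dots> = E" using pm2 by (simp add: E_def)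
    finally show ?thesis .
  qed
  have rE: "mrange E = mnull A2"
  proof
    show "mrange E \<subseteq> mnull A2"
    proof
      fix y assume "y \<in> mrange E"
      then obtain x where "y = E *v x" by (auto simp: mrange_def)
      hence "y = D2 *v (Mp *v (A *v x))" by (simp add: E_def matrix_vector_mul_assoc matrix_mul_assoc)
      thus "y \<in> mnull A2" using A2D2 by (simp add: mnull_def)
    qed
  next
    show "mnull A2 \<subseteq> mrange E"
    proof
      fix y assume "y \<in> mnull A2"
      hence "y \<in> mrange D2" using D2 by simp
      then obtain w where y: "y = D2 *v w" by (auto simp: mrange_def)
      have "A *v (E *v y) = (M ** Mp ** M) *v w"
        by (simp add: y E_def M_def matrix_vector_mul_assoc matrix_mul_assoc)
      also have "\<dots> = A *v y" using pm1 by (simp add: y M_def matrix_vector_mul_assoc matrix_mul_assoc)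
      finally have "E *v y = y" by (rule injA')
      thus "y \<in> mrange E" unfolding mrange_def by (metis rangeI)
    qed
  qed
  have nullD2c: "ct D2 *v w = 0 \<longleftrightarrow> w \<in> mrange (ct A2)" for w
  proof
    assume h: "ct D2 *v w = 0"
    obtain v z where wz: "w = ct A2 *v v + z" and z: "ct (ct A2) *v z = 0"
      using decomp[where B="ct A2" and x=w] by blast
    have "z \<in> mrange D2" using z D2 by (simp add: mnull_def)
    then obtain t where t: "z = D2 *v t" by (auto simp: mrange_def)
    have "ct D2 *v (ct A2 *v v) = 0"
      using A2D2m by (simp add: matrix_vector_mul_assoc matrix_mul_assoc ct_mult[symmetric])
    hence "ct D2 *v z = 0" using h wz by (simp add: matrix_vector_right_distrib)
    hence "ct D2 *v (D2 *v t) = 0" using t by simp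
    hence "D2 *v t = 0" by (rule cancel_vec)
    hence "z = 0" using t by simp
    thus "w \<in> mrange (ct A2)" using wz by (simp add: mrange_def)
  next
    assume "w \<in> mrange (ct A2)"
    then obtain v where "w = ct A2 *v v" by (auto simp: mrange_def)
    thus "ct D2 *v w = 0"
      using A2D2m by (simp add: matrix_vector_mul_assoc matrix_mul_assoc ct_mult[symmetric])
  qed
  have nullE: "E *v x = 0 \<longleftrightarrow> ct D2 *v (G *v x) = 0" for x
  proof
    assume h: "E *v x = 0"
    have "M *v (Mp *v (A *v x)) = A *v (E *v x)"
      by (simp add: E_def M_def matrix_vector_mul_assoc matrix_mul_assoc)
    also have "\<dots> = 0" using h by simp
    finally have 1: "M *v (Mp *v (A *v x)) = 0" .
    have "ct M *v (A *v x) = ct M *v (M *v (Mp *v (A *v x)))"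
      by (subst ctM) (simp add: matrix_vector_mul_assoc matrix_mul_assoc)
    also have "\<dots> = 0" using 1 by simp
    finally show "ct D2 *v (G *v x) = 0"
      by (simp add: M_def G_def ct_mult matrix_vector_mul_assoc matrix_mul_assoc)
  next
    assume h: "ct D2 *v (G *v x) = 0"
    have 1: "ct M *v (A *v x) = 0"
      using h by (simp add: M_def G_def ct_mult matrix_vector_mul_assoc matrix_mul_assoc)
    have "Mp *v (A *v x) = (Mp ** ct Mp) *v (ct M *v (A *v x))"
      by (subst Mpc) (simp add: matrix_vector_mul_assoc matrix_mul_assoc)
    also have "\<dots> = 0" using 1 by simp
    finally have "Mp *v (A *v x) = 0" .
    thus "E *v x = 0" by (simp add: E_def matrix_vector_mul_assoc[symmetric])
  qed
  have nE: "mnull E = K"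
  proof (rule set_eqI)
    fix x
    have "x \<in> mnull E \<longleftrightarrow> G *v x \<in> mrange (ct A2)"
      unfolding mnull_def using nullE nullD2c by simp
    also have "\<dots> \<longleftrightarrow> x \<in> K"
    proof
      assume "G *v x \<in> mrange (ct A2)"
      moreover have "x = Gi *v (G *v x)" by (simp add: GiG)
      ultimately show "x \<in> K" unfolding K_def by blast
    next
      assume "x \<in> K"
      then obtain y where "y \<in> mrange (ct A2)" "x = Gi *v y" unfolding K_def by blast
      moreover have "G *v (Gi *v y) = y" by (simp add: GGi)
      ultimately show "G *v x \<in> mrange (ct A2)" by simp
    qed
    finally show "x \<in> mnull E \<longleftrightarrow> x \<in> K" .
  qed
  have part1: "E = oblique_proj (mnull A2) K"
    using oblique_eq[OF EE rE nE] by simp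
  have A2F: "A2 ** F = A2"
  proof -
    have "A2 ** F = (S ** Si) ** A2" by (simp add: F_def S_def matrix_mul_assoc)
    thus ?thesis using Sinv by simp
  qed
  have FF: "F ** F = F"
  proof -
    have "F ** F = Gi ** ct A2 ** Si ** (A2 ** F)" by (simp add: F_def matrix_mul_assoc)
    thus ?thesis using A2F by (simp add: F_def)
  qed
  define P where "P = mat 1 - F"
  have PP: "P ** P = P"
    unfolding P_def using FF by (simp add: matrix_sub_ldistrib matrix_sub_rdistrib)
  have Fnull: "F *v y = 0" if "A2 *v y = 0" for y
    using that by (simp add: F_def matrix_vector_mul_assoc[symmetric])
  have rP: "mrange P = mnull A2"
  proof
    show "mrange P \<subseteq> mnull A2"
    proof
      fix y assume "y \<in> mrange P"
      then obtain x where "y = P *v x" by (auto simp: mrange_def)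
      hence "A2 *v y = (A2 - A2 ** F) *v x"
        by (simp add: P_def matrix_sub_ldistrib matrix_vector_mul_assoc matrix_mul_assoc)
      thus "y \<in> mnull A2" using A2F by (simp add: mnull_def)
    qed
  next
    show "mnull A2 \<subseteq> mrange P"
    proof
      fix y assume "y \<in> mnull A2"
      hence "P *v y = y" using Fnull by (simp add: P_def mnull_def matrix_vector_mult_diff_rdistrib)
      thus "y \<in> mrange P" unfolding mrange_def by (metis rangeI)
    qed
  qed
  have nP: "mnull P = K"
  proof (rule set_eqI)
    fix x
    have "x \<in> mnull P \<longleftrightarrow> F *v x = x"
      by (auto simp: mnull_def P_def matrix_vector_mult_diff_rdistrib)
    also have "\<dots> \<longleftrightarrow> x \<in> K"
    proof
      assume h: "F *v x = x"
      have "F *v x = Gi *v (ct A2 *v (Si *v (A2 *v x)))"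
        by (simp add: F_def matrix_vector_mul_assoc matrix_mul_assoc)
      thus "x \<in> K" using h unfolding K_def mrange_def by (metis rangeI image_eqI)
    next
      assume "x \<in> K"
      then obtain v where x: "x = Gi *v (ct A2 *v v)" unfolding K_def mrange_def by blast
      have "F *v x = (Gi ** ct A2 ** (Si ** S)) *v v"
        by (simp add: x F_def S_def matrix_vector_mul_assoc matrix_mul_assoc)
      thus "F *v x = x" using Sinv by (simp add: x matrix_vector_mul_assoc matrix_mul_assoc)
    qed
    finally show "x \<in> mnull P \<longleftrightarrow> x \<in> K" .
  qed
  have EP: "E = P" using proj_unique[OF EE PP] rE rP nE nP by simp
  have IE: "mat 1 - E = F" unfolding EP P_def by simp
  define c where "c = Ap *v b1 + (Gi ** ct A2 ** Si) *v (b2 - A2 *v (Ap *v b1))"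
  have elem: "(E ** Ap) *v b1 + (mat 1 - E) *v (A2p *v b2 + z) = c" if z: "z \<in> mnull A2" for z
  proof -
    have Fz: "F *v z = 0" using z Fnull by (simp add: mnull_def)
    have "(E ** Ap) *v b1 + (mat 1 - E) *v (A2p *v b2 + z)
        = Ap *v b1 - F *v (Ap *v b1) + F *v (A2p *v b2)"
      using Fz by (simp add: IE EP P_def matrix_vector_mult_diff_rdistrib matrix_vector_right_distrib
                   matrix_vector_mul_assoc[symmetric])
    also have "F *v (A2p *v b2) = (Gi ** ct A2 ** Si) *v b2"
      using A2A2p by (simp add: F_def matrix_vector_mul_assoc matrix_mul_assoc[symmetric])
    also have "F *v (Ap *v b1) = (Gi ** ct A2 ** Si) *v (A2 *v (Ap *v b1))"
      by (simp add: F_def matrix_vector_mul_assoc matrix_mul_assoc)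
    finally show ?thesis by (simp add: c_def matrix_vector_mult_diff_distrib algebra_simps)
  qed
  have part2: "{(E ** Ap) *v b1 + (mat 1 - E) *v (A2p *v b2 + z) | z. z \<in> mnull A2} = {c}"
  proof
    show "{(E ** Ap) *v b1 + (mat 1 - E) *v (A2p *v b2 + z) | z. z \<in> mnull A2} \<subseteq> {c}"
      using elem by blast
    have "(0::complex^'n) \<in> mnull A2" by (simp add: mnull_def)
    thus "{c} \<subseteq> {(E ** Ap) *v b1 + (mat 1 - E) *v (A2p *v b2 + z) | z. z \<in> mnull A2}"
      using elem[of 0] by blast
  qed
  show ?thesis
    using part1 part2
    by (simp add: E_def Mp_def M_def A_def K_def G_def Gi_def c_def Ap_def A2p_def S_def Si_def)
qed


end
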